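(* Let $\mathbb X,\mathbb Y$ be Euclidean spaces, $\Phi\colon\mathbb X\rightrightarrows\mathbb Y$ with closed graph, $(\bar x,\bar y)\in\operatorname{gph}\Phi$, $u\in\mathbb S_{\mathbb X}$ and $\gamma>1$. Assume $A^\gamma(u)$ holds, i.e., $\ker D^*_\gamma\Phi((\bar x,\bar y);(u,0))\subset\{0\}$ and for all $\alpha,\beta\ge0$ $$\widetilde D^*_\gamma\Phi((\bar x,\bar y);(u,0))(0)\cup\bigcup_{w\in\mathbb S_{\mathbb Y}}D^*_\gamma\Phi((\bar x,\bar y);(u,\alpha w))(\beta w)\subset\operatorname{Im}D^*\Phi(\bar x,\bar y).$$ Then $\Phi$ is asymptotically regular at $(\bar x,\bar y)$ in direction $u$.
   Context: Pseudo-coderivative of order $\gamma$ ($u\in\mathbb S_{\mathbb X}$, $v\in\mathbb Y$): $x^*\in D^*_\gamma\Phi((\bar x,\bar y);(u,v))(y^* )$ iff there are $u_k\to u$, $v_k\to v$, $t_k\downarrow0$, $x_k^*\to x^*$, $y_k^*\to y^*$ with $(x_k^*,-y_k^*/(t_k\|u_k\|)^{\gamma-1})\in\widehat{\mathcal N}_{\operatorname{gph}\Phi}(\bar x+t_ku_k,\bar y+(t_k\|u_k\|)^\gamma v_k)$ for all $k$; Gfrerer's pseudo-coderivative $\widetilde D^*_\gamma$ uses instead the point $(\bar x+t_ku_k,\bar y+t_kv_k)$. $\ker\Psi=\{y^*\mid0\in\Psi(y^* )\}$. $D^*\Phi(x,y)(y^* )=\{x^*\mid(x^*,-y^* )\in\mathcal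 N_{\operatorname{gph}\Phi}(x,y)\}$, $\widehat D^*$ the same with the regular normal cone $\widehat{\mathcal N}$, $\operatorname{Im}D^*\Phi(\bar x,\bar y)=\bigcup_{y^*}D^*\Phi(\bar x,\bar y)(y^* )$. Asymptotic regularity in direction $u$: for all $(x_k,y_k)\in\operatorname{gph}\Phi$, $x_k^*$, $\lambda_k$, $x^*$, $y^*$ with $x_k\notin\Phi^{-1}(\bar y)$, $y_k\ne\bar y$, $x_k^*\in\widehat D^*\Phi(x_k,y_k)(\lambda_k)$ for all $k$ and $x_k\to\bar x$, $y_k\to\bar y$, $x_k^*\to x^*$, $\frac{x_k-\bar x}{\|x_k-\bar x\|}\to u$, $\frac{y_k-\bar y}{\|x_k-\bar x\|}\to0$, $\frac{\|y_k-\bar y\|}{\|x_k-\bar x\|}\lambda_k\to y^*$, $\|\lambda_k\|\to\infty$, $\frac{y_k-\bar y}{\|y_k-\bar y\|}-\frac{\lambda_k}{\|\lambda_k\|}\to0$, one has $x^*\in\operatorname{Im}D^*\Phi(\bar x,\bar y)$. *)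

theory Defs
  imports "HOL-Analysis.Analysis"
begin

text \<open>Set-valued maps are modelled as functions 'a \<Rightarrow> 'b set; dual spaces of
Euclidean spaces are identified with the spaces themselves via the inner product.\<close>

definition gph :: "('a \<Rightarrow> 'b set) \<Rightarrow> ('a \<times> 'b) set" where
  "gph Phi = {(x, y). y \<in> Phi x}"

text \<open>Regular (Frechet) normal cone; empty outside the set.\<close>
definition rnormal :: "('c::real_inner) set \<Rightarrow> 'c \<Rightarrow> 'c set" where
  "rnormal S z = {zs. z \<in> S \<and>
     (\<forall>e>0. \<exists>d>0. \<forall>z'\<in>S. norm (z' - z) < d \<longrightarrow> inner zs (z' - z) \<le> e * norm (z' - z))}"

definition lnormal :: "('c::real_inner) set \<Rightarrow> 'c \<Rightarrow> 'c set" where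
  "lnormal S z = {zs. z \<in> S \<and> (\<exists>zk zsk. (\<forall>k. zk k \<in> S \<and> zsk k \<in> rnormal S (zk k)) \<and>
       zk \<longlonglongrightarrow> z \<and> zsk \<longlonglongrightarrow> zs)}"

definition coderiv :: "('a::real_inner \<Rightarrow> 'b::real_inner set) \<Rightarrow> 'a \<Rightarrow> 'b \<Rightarrow> 'b \<Rightarrow> 'a set" where
  "coderiv Phi x y ys = {xs. (xs, - ys) \<in> lnormal (gph Phi) (x, y)}"

definition rcoderiv :: "('a::real_inner \<Rightarrow> 'b::real_inner set) \<Rightarrow> 'a \<Rightarrow> 'b \<Rightarrow> 'b \<Rightarrow> 'a set" where
  "rcoderiv Phi x y ys = {xs. (xs, - ys) \<in> rnormal (gph Phi) (x, y)}"

definition coderiv_image :: "('a::real_inner \<Rightarrow> 'b::real_inner set) \<Rightarrow> 'a \<Rightarrow> 'b \<Rightarrow> 'a set" where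
  "coderiv_image Phi x y = (\<Union>ys. coderiv Phi x y ys)"

definition ker :: "('b \<Rightarrow> 'a::zero set) \<Rightarrow> 'b set" where
  "ker Psi = {ys. 0 \<in> Psi ys}"

text \<open>Pseudo-coderivative of order gamma, D^*_gamma Phi((xb,yb);(u,v))(ys).\<close>
definition pcoderiv :: "real \<Rightarrow> ('a::real_inner \<Rightarrow> 'b::real_inner set) \<Rightarrow> 'a \<Rightarrow> 'b \<Rightarrow> 'a \<Rightarrow> 'b \<Rightarrow> 'b \<Rightarrow> 'a set" where
  "pcoderiv gamma Phi xb yb u v ys = {xs. \<exists>uk vk t xsk ysk.
     uk \<longlonglongrightarrow> u \<and> vk \<longlonglongrightarrow> v \<and> (\<forall>k. t k > 0) \<and> t \<longlonglongrightarrow> 0 \<and>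
     xsk \<longlonglongrightarrow> xs \<and> ysk \<longlonglongrightarrow> ys \<and>
     (\<forall>k. (xsk k, - ((1 / (t k * norm (uk k)) powr (gamma - 1)) *\<^sub>R ysk k))
          \<in> rnormal (gph Phi) (xb + t k *\<^sub>R uk k, yb + ((t k * norm (uk k)) powr gamma) *\<^sub>R vk k))}"

definition gpcoderiv :: "real \<Rightarrow> ('a::real_inner \<Rightarrow> 'b::real_inner set) \<Rightarrow> 'a \<Rightarrow> 'b \<Rightarrow> 'a \<Rightarrow> 'b \<Rightarrow> 'b \<Rightarrow> 'a set" where
  "gpcoderiv gamma Phi xb yb u v ys = {xs. \<exists>uk vk t xsk ysk.
     uk \<longlonglongrightarrow> u \<and> vk \<longlonglongrightarrow> v \<and> (\<forall>k. t k > 0) \<and> t \<longlonglongrightarrow> 0 \<and>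
     xsk \<longlonglongrightarrow> xs \<and> ysk \<longlonglongrightarrow> ys \<and>
     (\<forall>k. (xsk k, - ((1 / (t k * norm (uk k)) powr (gamma - 1)) *\<^sub>R ysk k))
          \<in> rnormal (gph Phi) (xb + t k *\<^sub>R uk k, yb + t k *\<^sub>R vk k))}"

definition asym_regular :: "('a::real_inner \<Rightarrow> 'b::real_inner set) \<Rightarrow> 'a \<Rightarrow> 'b \<Rightarrow> 'a \<Rightarrow> bool" where
  "asym_regular Phi xb yb u \<longleftrightarrow>
    (\<forall>(x::nat \<Rightarrow> 'a) (y::nat \<Rightarrow> 'b) (xs::nat \<Rightarrow> 'a) (lam::nat \<Rightarrow> 'b) xstar ystar.
      (\<forall>k. (x k, y k) \<in> gph Phi \<and> x k \<notin> {z. yb \<in> Phi z} \<and> y k \<noteq> yb \<and>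
           xs k \<in> rcoderiv Phi (x k) (y k) (lam k)) \<and>
      x \<longlonglongrightarrow> xb \<and> y \<longlonglongrightarrow> yb \<and> xs \<longlonglongrightarrow> xstar \<and>
      (\<lambda>k. (1 / norm (x k - xb)) *\<^sub>R (x k - xb)) \<longlonglongrightarrow> u \<and>
      (\<lambda>k. (1 / norm (x k - xb)) *\<^sub>R (y k - yb)) \<longlonglongrightarrow> 0 \<and>
      (\<lambda>k. (norm (y k - yb) / norm (x k - xb)) *\<^sub>R lam k) \<longlonglongrightarrow> ystar \<and>
      filterlim (\<lambda>k. norm (lam k)) at_top sequentially \<and>
      (\<lambda>k. (1 / norm (y k - yb)) *\<^sub>R (y k - yb) - (1 / norm (lam k)) *\<^sub>R lam k) \<longlonglongrightarrow> 0
      \<longrightarrow> xstar \<in> coderiv_image Phi xb yb)"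

end

theory Submission
  imports Defs
begin

lemma rnormal_scale:
  assumes "z \<in> rnormal S p" "c \<ge> 0"
  shows "c *\<^sub>R z \<in> rnormal S p"
proof (cases "c = 0")
  case True
  then show ?thesis using assms unfolding rnormal_def by auto
next
  case False
  hence cp: "c > 0" using assms by auto
  show ?thesis unfolding rnormal_def
  proof (safe)
    show "p \<in> S" using assms unfolding rnormal_def by auto
  next
    fix e :: real assume e: "e > 0"
    have ec: "e / c > 0" using e cp by simp
    have "\<forall>e>0. \<exists>d>0. \<forall>z'\<in>S. norm (z' - p) < d \<longrightarrow> inner z (z' - p) \<le> e * norm (z' - p)"
      using assms(1) unfolding rnormal_def by blast
    from this[rule_format, OF ec] obtain d where d: "d > 0" "\<forall>z'\<in>S. norm (z' - p) < d \<longrightarrow> inner z (z' - p) \<le> (e / c) * norm (z' - p)"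
      by blast
    show "\<exists>d>0. \<forall>z'\<in>S. norm (z' - p) < d \<longrightarrow> inner (c *\<^sub>R z) (z' - p) \<le> e * norm (z' - p)"
    proof (intro exI[of _ d] conjI ballI impI)
      fix z' assume "z' \<in> S" "norm (z' - p) < d"
      with d have "inner z (z' - p) \<le> (e / c) * norm (z' - p)" by auto
      hence "c * inner z (z' - p) \<le> c * ((e / c) * norm (z' - p))" using cp mult_left_mono by (metis less_eq_real_def)
      thus "inner (c *\<^sub>R z) (z' - p) \<le> e * norm (z' - p)" using cp by (simp add: field_simps)
    qed (rule d(1))
  qed
qed

theorem theorem5p17:
  fixes Phi :: "'a::euclidean_space \<Rightarrow> 'b::euclidean_space set"
    and xb :: 'a and yb :: 'b and u :: 'a and gamma :: real
  assumes "closed (gph Phi)"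
    and "(xb, yb) \<in> gph Phi"
    and "u \<in> sphere 0 1"
    and "gamma > 1"
    and "ker (pcoderiv gamma Phi xb yb u 0) \<subseteq> {0}"
    and "\<And>alpha beta. alpha \<ge> 0 \<Longrightarrow> beta \<ge> 0 \<Longrightarrow>
           gpcoderiv gamma Phi xb yb u 0 0 \<union>
           (\<Union>w\<in>sphere 0 1. pcoderiv gamma Phi xb yb u (alpha *\<^sub>R w) (beta *\<^sub>R w))
           \<subseteq> coderiv_image Phi xb yb"
  shows "asym_regular Phi xb yb u"
  unfolding asym_regular_def
proof (intro allI impI, elim conjE)
  fix x :: "nat \<Rightarrow> 'a" and y :: "nat \<Rightarrow> 'b" and xs :: "nat \<Rightarrow> 'a" and lam :: "nat \<Rightarrow> 'b"
    and xstar ystar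
  assume H: "\<forall>k. (x k, y k) \<in> gph Phi \<and> x k \<notin> {z. yb \<in> Phi z} \<and> y k \<noteq> yb \<and>
           xs k \<in> rcoderiv Phi (x k) (y k) (lam k)"
    and xl: "x \<longlonglongrightarrow> xb" and yl: "y \<longlonglongrightarrow> yb" and xsl: "xs \<longlonglongrightarrow> xstar"
    and ul: "(\<lambda>k. (1 / norm (x k - xb)) *\<^sub>R (x k - xb)) \<longlonglongrightarrow> u"
    and vl: "(\<lambda>k. (1 / norm (x k - xb)) *\<^sub>R (y k - yb)) \<longlonglongrightarrow> 0"
    and ysl: "(\<lambda>k. (norm (y k - yb) / norm (x k - xb)) *\<^sub>R lam k) \<longlonglongrightarrow> ystar"
    and laml: "filterlim (\<lambda>k. norm (lam k)) at_top sequentially"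
    and dirl: "(\<lambda>k. (1 / norm (y k - yb)) *\<^sub>R (y k - yb) - (1 / norm (lam k)) *\<^sub>R lam k) \<longlonglongrightarrow> 0"
  define t where "t k = norm (x k - xb)" for k
  define uk where "uk k = (1 / t k) *\<^sub>R (x k - xb)" for k
  define s where "s k = norm (y k - yb)" for k
  define w where "w k = (1 / s k) *\<^sub>R (y k - yb)" for k
  define l where "l k = norm (lam k)" for k
  define b where "b k = t k powr (gamma - 1) * l k" for k
  define a where "a k = s k / t k powr gamma" for k
  define d where "d k = 1 / (1 + b k)" for k
  define e where "e k = (1 / l k) *\<^sub>R lam k" for k
  define v where "v k = (1 / t k powr gamma) *\<^sub>R (y k - yb)" for k
  have ybx: "yb \<in> Phi xb" using assms(2) by (simp add: gph_def)
  have tpos: "t k > 0" for k using H ybx unfolding t_def by (metis (mono_tags) mem_Collect_eq norm_eq_zero right_minus_eq zero_less_norm_iff)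
  have spos: "s k > 0" for k using H unfolding s_def by auto
  have normuk: "norm (uk k) = 1" for k using tpos[of k] unfolding uk_def t_def by simp
  have normw: "norm (w k) = 1" for k using spos[of k] unfolding w_def s_def by simp
  have P1: "xb + t k *\<^sub>R uk k = x k" for k using tpos[of k] unfolding uk_def by simp
  have P2: "yb + ((t k * norm (uk k)) powr gamma) *\<^sub>R v k = y k" for k
    using tpos[of k] unfolding v_def normuk by simp
  have P3: "1 / (t k * norm (uk k)) powr (gamma - 1) = 1 / t k powr (gamma - 1)" for k
    using tpos[of k] unfolding normuk by (simp add: powr_divide)
  have bnn: "b k \<ge> 0" for k unfolding b_def l_def by simp
  have vaw: "v k = a k *\<^sub>R w k" for k using spos[of k] unfolding v_def a_def w_def by simp
  have tl: "t \<longlonglongrightarrow> 0" unfolding t_def using xl by (simp add: LIM_zero tendsto_norm_zero)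
  have abl: "(\<lambda>k. a k * b k) \<longlonglongrightarrow> norm ystar"
  proof -
    have "a k * b k = norm ((norm (y k - yb) / norm (x k - xb)) *\<^sub>R lam k)" for k
    proof -
      have "t k powr (gamma - 1) = t k powr gamma / t k"
        using tpos[of k] by (simp add: powr_diff)
      thus ?thesis using tpos[of k] spos[of k] unfolding a_def b_def s_def t_def l_def by (simp add: field_simps)
    qed
    thus ?thesis using tendsto_norm[OF ysl] by simp
  qed
  have ewl: "(\<lambda>k. e k - w k) \<longlonglongrightarrow> 0"
  proof -
    have "(\<lambda>k. - (w k - e k)) \<longlonglongrightarrow> - 0" using tendsto_minus[OF dirl] unfolding w_def e_def s_def l_def .
    thus ?thesis by simp
  qed
  obtain N where N: "\<And>k. k \<ge> N \<Longrightarrow> l k \<ge> 1"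
    using laml unfolding filterlim_at_top eventually_sequentially l_def by blast
  have bdd: "bounded (range (\<lambda>k. (d (k + N), w (k + N))))"
    unfolding bounded_iff
  proof (intro exI[of _ 2] ballI)
    fix z assume "z \<in> range (\<lambda>k. (d (k + N), w (k + N)))"
    then obtain k where z: "z = (d (k + N), w (k + N))" by auto
    have "norm (d (k + N)) \<le> 1" using bnn[of "k + N"] unfolding d_def by simp
    hence "norm z \<le> 1 + 1" using norm_Pair_le[of "d (k + N)" "w (k + N)"] normw[of "k + N"] unfolding z by linarith
    thus "norm z \<le> 2" by simp
  qed
  obtain lim r where r: "strict_mono r" and rl: "((\<lambda>k. (d (k + N), w (k + N))) \<circ> r) \<longlonglongrightarrow> lim"
    using bounded_imp_convergent_subsequence[OF bdd] by blast
  define R where "R k = r k + N" for k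
  have R: "strict_mono R" using r unfolding R_def strict_mono_def by simp
  have RN: "R k \<ge> N" for k unfolding R_def by simp
  define d0 where "d0 = fst lim"
  define w0 where "w0 = snd lim"
  have dR: "(\<lambda>k. d (R k)) \<longlonglongrightarrow> d0" using tendsto_fst[OF rl] unfolding d0_def R_def by (simp add: o_def)
  have wR: "(\<lambda>k. w (R k)) \<longlonglongrightarrow> w0" using tendsto_snd[OF rl] unfolding w0_def R_def by (simp add: o_def)
  have sub: "\<And>f L. f \<longlonglongrightarrow> L \<Longrightarrow> (\<lambda>k. f (R k)) \<longlonglongrightarrow> L"
    using LIMSEQ_subseq_LIMSEQ[OF _ R] by (simp add: o_def)
  have nw0: "norm w0 = 1"
    using tendsto_norm[OF wR] normw by (simp add: LIMSEQ_const_iff)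
  have eR: "(\<lambda>k. e (R k)) \<longlonglongrightarrow> w0"
    using tendsto_add[OF sub[OF ewl] wR] by simp
  have dpos: "d k > 0" for k using bnn[of k] unfolding d_def by simp
  have dle: "d k \<le> 1" for k using bnn[of k] unfolding d_def by simp
  have d0nn: "d0 \<ge> 0"
    by (rule tendsto_lowerbound[OF dR]) (auto simp: less_imp_le[OF dpos])
  have d0le: "d0 \<le> 1"
    by (rule tendsto_upperbound[OF dR]) (auto simp: dle)
  have bd: "b k = (1 - d k) / d k" for k
    using bnn[of k] unfolding d_def by (simp add: field_simps)
  have ibd: "1 / b k = d k / (1 - d k)" for k
  proof (cases "b k = 0")
    case True thus ?thesis unfolding d_def by simp
  next
    case False
    hence "b k > 0" using bnn[of k] by simp
    thus ?thesis unfolding d_def by (simp add: field_simps)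
  qed
  have lR: "l (R k) \<ge> 1" for k using N RN by blast
  have bRpos: "b (R k) > 0" for k using lR[of k] tpos[of "R k"] unfolding b_def by simp
  have M: "(xs k, - lam k) \<in> rnormal (gph Phi) (x k, y k)" for k
    using H unfolding rcoderiv_def by blast
  have ysk_eq: "t k powr (gamma - 1) *\<^sub>R lam k = b k *\<^sub>R e k" if "l k \<noteq> 0" for k
    using that unfolding b_def e_def by simp
  have scal1: "(1 / t k powr (gamma - 1)) *\<^sub>R (t k powr (gamma - 1) *\<^sub>R lam k) = lam k" for k
    using tpos[of k] by simp
  have aR_eq: "a (R k) = (a (R k) * b (R k)) * (1 / b (R k))" for k
    using bRpos[of k] by simp
  have abR: "(\<lambda>k. a (R k) * b (R k)) \<longlonglongrightarrow> norm ystar" using sub[OF abl] .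
  have "d0 = 0 \<or> d0 = 1 \<or> (0 < d0 \<and> d0 < 1)" using d0nn d0le by linarith
  moreover
  {
    assume d00: "d0 = 0"
    have ibR: "(\<lambda>k. 1 / b (R k)) \<longlonglongrightarrow> 0"
      unfolding ibd using tendsto_divide[OF dR tendsto_diff[OF tendsto_const dR], of 1] d00 by simp
    have xskC: "(\<lambda>k. (1 / b (R k)) *\<^sub>R xs (R k)) \<longlonglongrightarrow> 0"
      using tendsto_scaleR[OF ibR sub[OF xsl]] by simp
    have aR: "(\<lambda>k. a (R k)) \<longlonglongrightarrow> 0"
      using tendsto_mult[OF abR ibR] aR_eq by simp
    have vR: "(\<lambda>k. v (R k)) \<longlonglongrightarrow> 0"
      using tendsto_scaleR[OF aR wR] vaw by simp
    have "0 \<in> pcoderiv gamma Phi xb yb u 0 w0"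
      unfolding pcoderiv_def mem_Collect_eq
    proof (rule exI[of _ "\<lambda>k. uk (R k)"], rule exI[of _ "\<lambda>k. v (R k)"], rule exI[of _ "\<lambda>k. t (R k)"], rule exI[of _ "\<lambda>k. (1 / b (R k)) *\<^sub>R xs (R k)"], rule exI[of _ "\<lambda>k. e (R k)"], intro conjI allI)
      show "(\<lambda>k. uk (R k)) \<longlonglongrightarrow> u" using sub[OF ul] unfolding uk_def t_def .
      show "(\<lambda>k. v (R k)) \<longlonglongrightarrow> 0" by (rule vR)
      show "t (R k) > 0" for k by (rule tpos)
      show "(\<lambda>k. t (R k)) \<longlonglongrightarrow> 0" using sub[OF tl] .
      show "(\<lambda>k. (1 / b (R k)) *\<^sub>R xs (R k)) \<longlonglongrightarrow> 0" by (rule xskC)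
      show "(\<lambda>k. e (R k)) \<longlonglongrightarrow> w0" by (rule eR)
      fix k
      have "((1 / b (R k)) *\<^sub>R xs (R k), - ((1 / (t (R k) * norm (uk (R k))) powr (gamma - 1)) *\<^sub>R e (R k)))
            = (1 / b (R k)) *\<^sub>R (xs (R k), - lam (R k))"
        unfolding P3 e_def b_def by (simp add: field_simps)
      moreover have "(1 / b (R k)) *\<^sub>R (xs (R k), - lam (R k)) \<in> rnormal (gph Phi) (x (R k), y (R k))"
        using rnormal_scale[OF M] bRpos[of k] by simp
      ultimately show "((1 / b (R k)) *\<^sub>R xs (R k), - ((1 / (t (R k) * norm (uk (R k))) powr (gamma - 1)) *\<^sub>R e (R k)))
          \<in> rnormal (gph Phi) (xb + t (R k) *\<^sub>R uk (R k), yb + ((t (R k) * norm (uk (R k))) powr gamma) *\<^sub>R v (R k))"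
        unfolding P1 P2 by simp
    qed
    hence "w0 \<in> ker (pcoderiv gamma Phi xb yb u 0)" unfolding ker_def by simp
    hence "w0 = 0" using assms(5) by blast
    hence False using nw0 by simp
  }
  moreover
  {
    assume d01: "d0 = 1"
    have bR: "(\<lambda>k. b (R k)) \<longlonglongrightarrow> 0"
      unfolding bd using tendsto_divide[OF tendsto_diff[OF tendsto_const dR] dR, of 1] d01 by simp
    have yskR: "(\<lambda>k. t (R k) powr (gamma - 1) *\<^sub>R lam (R k)) \<longlonglongrightarrow> 0"
    proof (rule tendsto_norm_zero_cancel)
      show "(\<lambda>k. norm (t (R k) powr (gamma - 1) *\<^sub>R lam (R k))) \<longlonglongrightarrow> 0"
        using bR unfolding b_def l_def by simp
    qed
    have "xstar \<in> gpcoderiv gamma Phi xb yb u 0 0"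
      unfolding gpcoderiv_def mem_Collect_eq
    proof (rule exI[of _ "\<lambda>k. uk (R k)"], rule exI[of _ "\<lambda>k. (1 / t (R k)) *\<^sub>R (y (R k) - yb)"], rule exI[of _ "\<lambda>k. t (R k)"], rule exI[of _ "\<lambda>k. xs (R k)"], rule exI[of _ "\<lambda>k. t (R k) powr (gamma - 1) *\<^sub>R lam (R k)"], intro conjI allI)
      show "(\<lambda>k. uk (R k)) \<longlonglongrightarrow> u" using sub[OF ul] unfolding uk_def t_def .
      show "(\<lambda>k. (1 / t (R k)) *\<^sub>R (y (R k) - yb)) \<longlonglongrightarrow> 0" using sub[OF vl] unfolding t_def .
      show "t (R k) > 0" for k by (rule tpos)
      show "(\<lambda>k. t (R k)) \<longlonglongrightarrow> 0" using sub[OF tl] .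
      show "(\<lambda>k. xs (R k)) \<longlonglongrightarrow> xstar" using sub[OF xsl] .
      show "(\<lambda>k. t (R k) powr (gamma - 1) *\<^sub>R lam (R k)) \<longlonglongrightarrow> 0" by (rule yskR)
      fix k
      have "yb + t (R k) *\<^sub>R ((1 / t (R k)) *\<^sub>R (y (R k) - yb)) = y (R k)"
        using tpos[of "R k"] by simp
      thus "(xs (R k), - ((1 / (t (R k) * norm (uk (R k))) powr (gamma - 1)) *\<^sub>R (t (R k) powr (gamma - 1) *\<^sub>R lam (R k))))
          \<in> rnormal (gph Phi) (xb + t (R k) *\<^sub>R uk (R k), yb + t (R k) *\<^sub>R ((1 / t (R k)) *\<^sub>R (y (R k) - yb)))"
        unfolding P1 P3 scal1 using M by simp
    qed
    hence "xstar \<in> coderiv_image Phi xb yb" using assms(6)[of 0 0] by blast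
  }
  moreover
  {
    assume d0b: "0 < d0" "d0 < 1"
    define beta where "beta = (1 - d0) / d0"
    define alpha where "alpha = norm ystar * (1 / beta)"
    have betapos: "beta > 0" unfolding beta_def using d0b by simp
    have alphann: "alpha \<ge> 0" unfolding alpha_def using betapos by simp
    have bR: "(\<lambda>k. b (R k)) \<longlonglongrightarrow> beta"
      unfolding bd beta_def using tendsto_divide[OF tendsto_diff[OF tendsto_const dR] dR, of 1] d0b by simp
    have aR: "(\<lambda>k. a (R k)) \<longlonglongrightarrow> alpha"
      unfolding alpha_def using tendsto_mult[OF abR tendsto_divide[OF tendsto_const bR, of 1]] aR_eq betapos by simp
    have vR: "(\<lambda>k. v (R k)) \<longlonglongrightarrow> alpha *\<^sub>R w0"
      using tendsto_scaleR[OF aR wR] vaw by simp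
    have yskR: "(\<lambda>k. t (R k) powr (gamma - 1) *\<^sub>R lam (R k)) \<longlonglongrightarrow> beta *\<^sub>R w0"
    proof -
      have "l (R k) \<noteq> 0" for k using lR[of k] by simp
      hence "t (R k) powr (gamma - 1) *\<^sub>R lam (R k) = b (R k) *\<^sub>R e (R k)" for k using ysk_eq by blast
      thus ?thesis using tendsto_scaleR[OF bR eR] by simp
    qed
    have "xstar \<in> pcoderiv gamma Phi xb yb u (alpha *\<^sub>R w0) (beta *\<^sub>R w0)"
      unfolding pcoderiv_def mem_Collect_eq
    proof (rule exI[of _ "\<lambda>k. uk (R k)"], rule exI[of _ "\<lambda>k. v (R k)"], rule exI[of _ "\<lambda>k. t (R k)"], rule exI[of _ "\<lambda>k. xs (R k)"], rule exI[of _ "\<lambda>k. t (R k) powr (gamma - 1) *\<^sub>R lam (R k)"], intro conjI allI)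
      show "(\<lambda>k. uk (R k)) \<longlonglongrightarrow> u" using sub[OF ul] unfolding uk_def t_def .
      show "(\<lambda>k. v (R k)) \<longlonglongrightarrow> alpha *\<^sub>R w0" by (rule vR)
      show "t (R k) > 0" for k by (rule tpos)
      show "(\<lambda>k. t (R k)) \<longlonglongrightarrow> 0" using sub[OF tl] .
      show "(\<lambda>k. xs (R k)) \<longlonglongrightarrow> xstar" using sub[OF xsl] .
      show "(\<lambda>k. t (R k) powr (gamma - 1) *\<^sub>R lam (R k)) \<longlonglongrightarrow> beta *\<^sub>R w0" by (rule yskR)
      fix k
      show "(xs (R k), - ((1 / (t (R k) * norm (uk (R k))) powr (gamma - 1)) *\<^sub>R (t (R k) powr (gamma - 1) *\<^sub>R lam (R k))))
          \<in> rnormal (gph Phi) (xb + t (R k) *\<^sub>R uk (R k), yb + ((t (R k) * norm (uk (R k))) powr gamma) *\<^sub>R v (R k))"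
        unfolding P1 P2 P3 scal1 using M by simp
    qed
    moreover have "w0 \<in> sphere 0 1" using nw0 by simp
    ultimately have "xstar \<in> coderiv_image Phi xb yb" using assms(6)[OF alphann less_imp_le[OF betapos]] by blast
  }
  ultimately show "xstar \<in> coderiv_image Phi xb yb" by blast
qed

end
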